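(* Let $n\ge1$ and let $i$ be an index such that $R_{n,i}=\max_{0\le k\le n}R_{n,k}$. If $(2n-1)/3$ is an integer, then $i=(2n-1)/3$; otherwise $i=\lfloor (2n-1)/3\rfloor$ or $i=\lceil (2n-1)/3\rceil$.
   Context: Let $D$ be the derivation of $\mathbb{Q}[y,z]$ with $D(y)=z^2$, $D(z)=yz$ (corresponding to $d/dx$ with $y=\tan x$, $z=\sec x$). The integers $R_{n,k}$ are defined for $n\ge1$ by $D^n(y+z)=\sum_{k=0}^nR_{n,k}y^{n-k}z^{k+1}$ in $\mathbb{Q}[y,z]$. Equivalently, with $R_n(x)=\sum_{k=0}^nR_{n,k}x^k$: $R_1(x)=1+x$ and $R_{n+1}(x)=(1+nx^2)R_n(x)+x(1-x^2)R_n'(x)$ for $n\ge1$. *)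

theory Defs
  imports Complex_Main "HOL-Computational_Algebra.Polynomial"
begin

text \<open>The polynomials R_n(x) = sum_k R_{n,k} x^k, defined for n >= 1 by
  R_1(x) = 1 + x and R_{n+1}(x) = (1 + n x^2) R_n(x) + x (1 - x^2) R_n'(x).
  The value at n = 0 is an irrelevant dummy (0).\<close>

fun Rpoly :: "nat \<Rightarrow> int poly" where
  "Rpoly 0 = 0"
| "Rpoly (Suc 0) = [:1, 1:]"
| "Rpoly (Suc (Suc m)) =
     (1 + smult (int (Suc m)) ([:0, 1:] ^ 2)) * Rpoly (Suc m)
     + [:0, 1:] * (1 - [:0, 1:] ^ 2) * pderiv (Rpoly (Suc m))"

definition Rnk :: "nat \<Rightarrow> nat \<Rightarrow> int" where
  "Rnk n k = coeff (Rpoly n) k"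

end

theory Submission
  imports Defs
begin

lemma coeff_step:
  fixes p :: "'a::idom poly"
  shows "coeff ((1 + smult a ([:0,1:]^2)) * p + [:0,1:] * (1 - [:0,1:]^2) * pderiv p) k =
   of_nat (Suc k) * coeff p k + (if 2 \<le> k then (a - of_nat k + 2) * coeff p (k-2) else 0)"
proof -
  have e: "(1 + smult a ([:0,1:]^2)) * p + [:0,1:] * (1 - [:0,1:]^2) * pderiv p
     = p + smult a (pCons 0 (pCons 0 p)) + pCons 0 (pderiv p) - pCons 0 (pCons 0 (pCons 0 (pderiv p)))"
    by (simp add: power2_eq_square algebra_simps)
  show ?thesis
    unfolding e
    by (cases k; cases "k - 1"; cases "k-2")
       (auto simp: coeff_pderiv algebra_simps of_nat_diff)
qed

fun RR :: "nat \<Rightarrow> real poly" where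
  "RR 0 = 0"
| "RR (Suc 0) = [:1, 1:]"
| "RR (Suc (Suc m)) =
     (1 + smult (of_nat (Suc m)) ([:0, 1:] ^ 2)) * RR (Suc m)
     + [:0, 1:] * (1 - [:0, 1:] ^ 2) * pderiv (RR (Suc m))"

lemma RR_coeff: "coeff (RR n) k = of_int (coeff (Rpoly n) k)"
proof (induction n arbitrary: k rule: RR.induct)
  case 1 then show ?case by simp
next
  case 2 then show ?case by (cases k; cases "k-1") auto
next
  case (3 m)
  have a: "coeff (RR (Suc (Suc m))) k = of_nat (Suc k) * coeff (RR (Suc m)) k + (if 2 \<le> k then (of_nat (Suc m) - of_nat k + 2) * coeff (RR (Suc m)) (k-2) else 0)"
    using coeff_step[of "of_nat (Suc m)" "RR (Suc m)" k] by simp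
  have b: "coeff (Rpoly (Suc (Suc m))) k = of_nat (Suc k) * coeff (Rpoly (Suc m)) k + (if 2 \<le> k then (of_nat (Suc m) - of_nat k + 2) * coeff (Rpoly (Suc m)) (k-2) else 0)"
    using coeff_step[of "int (Suc m)" "Rpoly (Suc m)" k] by simp
  show ?case unfolding a b using "3.IH" by simp
qed

definition lf :: "real \<Rightarrow> real poly" where "lf q = [:1 - q, q:]"

lemma coeff_lin: "coeff (lf q * g) k = (1 - q) * coeff g k + q * coeff (pCons 0 g) k"
  by (cases k) (auto simp: mult_pCons_left lf_def)

lemma degree_lf: "q \<noteq> 0 \<Longrightarrow> degree (lf q) = 1"
  by (simp add: lf_def)

lemma poly_lf[simp]: "poly (lf q) x = 1 - q + q * x"
  by (simp add: lf_def)

lemma pderiv_lf[simp]: "pderiv (lf q) = [:q:]"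
  by (simp add: lf_def pderiv_pCons)

lemma prod_nonneg_coeff:
  assumes "finite A" "\<forall>i\<in>A. 0 \<le> p i \<and> p i \<le> 1"
  shows "coeff (\<Prod>i\<in>A. lf (p i)) k \<ge> 0"
  using assms
proof (induction A arbitrary: k rule: finite_induct)
  case empty then show ?case by (cases k) auto
next
  case (insert x F)
  have "coeff (\<Prod>i\<in>insert x F. lf (p i)) k = (1 - p x) * coeff (\<Prod>i\<in>F. lf (p i)) k + p x * coeff (pCons 0 (\<Prod>i\<in>F. lf (p i))) k"
    using insert by (simp add: coeff_lin)
  moreover have "coeff (pCons 0 (\<Prod>i\<in>F. lf (p i))) k \<ge> 0"
    using insert by (cases k) auto
  ultimately show ?case using insert by simp
qed

lemma prod_coeff0:
  assumes "finite A" "\<forall>i\<in>A. 0 < p i \<and> p i < 1"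
  shows "coeff (\<Prod>i\<in>A. lf (p i)) 0 > 0"
proof -
  have "coeff (\<Prod>i\<in>A. lf (p i)) 0 = (\<Prod>i\<in>A. 1 - p i)"
    by (simp add: poly_0_coeff_0[symmetric] poly_prod)
  also have "\<dots> > 0" using assms by (intro prod_pos) auto
  finally show ?thesis .
qed

lemma prod_top:
  assumes "finite A" "\<forall>i\<in>A. 0 < p i \<and> p i < 1"
  shows "coeff (\<Prod>i\<in>A. lf (p i)) (card A) > 0" "coeff (\<Prod>i\<in>A. lf (p i)) (Suc (card A)) = 0"
proof -
  have nz: "\<forall>i\<in>A. lf (p i) \<noteq> 0" using assms by (auto simp: lf_def)
  have dg: "degree (\<Prod>i\<in>A. lf (p i)) = card A"
  proof -
    have "(\<Sum>i\<in>A. degree (lf (p i))) = (\<Sum>i\<in>A. 1)"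
      using assms by (intro sum.cong) (auto simp: degree_lf)
    then show ?thesis by (simp add: degree_prod_eq_sum_degree[OF nz])
  qed
  have "coeff (\<Prod>i\<in>A. lf (p i)) (card A) = (\<Prod>i\<in>A. lead_coeff (lf (p i)))"
    using lead_coeff_prod[of "\<lambda>i. lf (p i)" A] dg by simp
  also have "\<dots> = (\<Prod>i\<in>A. p i)"
      proof (intro prod.cong refl)
    fix x assume "x \<in> A"
    then have "p x \<noteq> 0" using assms by fastforce
    then show "lead_coeff (lf (p x)) = p x" by (simp add: degree_lf, simp add: lf_def)
  qed
  also have "\<dots> > 0" using assms by (intro prod_pos) auto
  finally show "coeff (\<Prod>i\<in>A. lf (p i)) (card A) > 0" .
  show "coeff (\<Prod>i\<in>A. lf (p i)) (Suc (card A)) = 0"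
    using dg by (simp add: coeff_eq_0)
qed

lemma prod_I1:
  assumes "finite A" "j \<in> A"
  shows "coeff (\<Prod>i\<in>A. lf (p i)) k = (1 - p j) * coeff (\<Prod>i\<in>A-{j}. lf (p i)) k + p j * coeff (pCons 0 (\<Prod>i\<in>A-{j}. lf (p i))) k"
proof -
  have "(\<Prod>i\<in>A. lf (p i)) = lf (p j) * (\<Prod>i\<in>A-{j}. lf (p i))"
    using assms by (simp add: prod.remove)
  then show ?thesis by (simp add: coeff_lin)
qed

lemma prod_I2:
  assumes "finite A"
  shows "of_nat k * coeff (\<Prod>i\<in>A. lf (p i)) k = (\<Sum>j\<in>A. p j * coeff (pCons 0 (\<Prod>i\<in>A-{j}. lf (p i))) k)"
proof (cases k)
  case 0 then show ?thesis by simp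
next
  case (Suc t)
  have "of_nat k * coeff (\<Prod>i\<in>A. lf (p i)) k = coeff (pderiv (\<Prod>i\<in>A. lf (p i))) t"
    using Suc by (simp add: coeff_pderiv)
  also have "\<dots> = (\<Sum>j\<in>A. coeff ((\<Prod>i\<in>A-{j}. lf (p i)) * [:p j:]) t)"
    by (simp add: pderiv_prod coeff_sum)
  also have "\<dots> = (\<Sum>j\<in>A. p j * coeff (pCons 0 (\<Prod>i\<in>A-{j}. lf (p i))) k)"
    using Suc by (simp add: mult.commute)
  finally show ?thesis .
qed

lemma darroch1:
  assumes "finite A" "\<forall>i\<in>A. 0 < p i \<and> p i < 1" "1 \<le> k" "real k \<le> (\<Sum>i\<in>A. p i)"
  shows "coeff (\<Prod>i\<in>A. lf (p i)) (k - 1) < coeff (\<Prod>i\<in>A. lf (p i)) k"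
  using assms
proof (induction "card A" arbitrary: A k rule: less_induct)
  case less
  obtain t where kt: "k = Suc t" using less.prems(3) by (cases k) auto
  define c where "c = coeff (\<Prod>i\<in>A. lf (p i))"
  define g where "g j = coeff (\<Prod>i\<in>A-{j}. lf (p i))" for j
  define gm where "gm j = coeff (pCons 0 (\<Prod>i\<in>A-{j}. lf (p i)))" for j
  define mu where "mu = (\<Sum>i\<in>A. p i)"
  have gmS: "gm j (Suc s) = g j s" for j s by (simp add: gm_def g_def)
  have I2: "of_nat k * c k = (\<Sum>j\<in>A. p j * g j t)"
    using prod_I2[OF less.prems(1), of k p] kt by (simp add: c_def gm_def g_def)
  have I1: "c t = (1 - p j) * g j t + p j * gm j t" if "j \<in> A" for j
    using prod_I1[OF less.prems(1) that] by (simp add: c_def g_def gm_def)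
  have "mu * c t = (\<Sum>j\<in>A. p j * c t)" by (simp add: mu_def sum_distrib_right)
  also have "\<dots> = (\<Sum>j\<in>A. p j * ((1 - p j) * g j t + p j * gm j t))"
    using I1 by (intro sum.cong) auto
  finally have muc: "mu * c t = \<dots>" .
  have D: "of_nat k * c k - mu * c t = (\<Sum>j\<in>A. (p j)^2 * (g j t - gm j t))"
    unfolding I2 muc sum_subtractf[symmetric]
    by (intro sum.cong) (auto simp: algebra_simps power2_eq_square)
  have Ane: "A \<noteq> {}" using less.prems(3,4) by auto
  have pos: "(p j)^2 * (g j t - gm j t) > 0" if "j \<in> A" for j
  proof -
    have pj: "0 < p j" "p j < 1" using less.prems(2) that by auto
    have "g j t > gm j t"
    proof (cases t)
      case 0
      have "g j 0 > 0" unfolding g_def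
        using less.prems(1,2) by (intro prod_coeff0) auto
      then show ?thesis using 0 by (simp add: gm_def)
    next
      case (Suc s)
      have cardlt: "card (A - {j}) < card A"
        using less.prems(1) that by (rule card_Diff1_less)
      have sumd: "(\<Sum>i\<in>A-{j}. p i) = mu - p j"
        using less.prems(1) that by (simp add: mu_def sum_diff1)
      have "real t \<le> (\<Sum>i\<in>A-{j}. p i)"
        unfolding sumd using less.prems(4) kt pj by (simp add: mu_def)
      from less.hyps[OF cardlt, of t] this Suc less.prems(1,2)
      have "coeff (\<Prod>i\<in>A-{j}. lf (p i)) s < coeff (\<Prod>i\<in>A-{j}. lf (p i)) t" by auto
      then show ?thesis using Suc by (simp add: g_def gmS)
    qed
    then show ?thesis using pj by simp
  qed
  have "(\<Sum>j\<in>A. (p j)^2 * (g j t - gm j t)) > 0"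
    using Ane less.prems(1) pos by (intro sum_pos) auto
  moreover have "c t \<ge> 0" unfolding c_def
    using less.prems(2) by (intro prod_nonneg_coeff less.prems(1)) auto
  moreover have "real k \<le> mu" using less.prems(4) by (simp add: mu_def)
  ultimately have "of_nat k * (c k - c t) > 0"
    using D by (smt (verit, ccfv_SIG) mult_right_mono right_diff_distrib)
  then have "c k > c t" using kt by (simp add: zero_less_mult_iff)
  then show ?case using kt by (simp add: c_def)
qed

lemma darroch2:
  assumes "finite A" "\<forall>i\<in>A. 0 < p i \<and> p i < 1" "Suc k \<le> card A" "(\<Sum>i\<in>A. p i) \<le> real k"
  shows "coeff (\<Prod>i\<in>A. lf (p i)) (Suc k) < coeff (\<Prod>i\<in>A. lf (p i)) k"
  using assms
proof (induction "card A" arbitrary: A k rule: less_induct)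
  case less
  define c where "c = coeff (\<Prod>i\<in>A. lf (p i))"
  define g where "g j = coeff (\<Prod>i\<in>A-{j}. lf (p i))" for j
  define gm where "gm j = coeff (pCons 0 (\<Prod>i\<in>A-{j}. lf (p i)))" for j
  define mu where "mu = (\<Sum>i\<in>A. p i)"
  define N where "N = card A"
  have gmS: "gm j (Suc s) = g j s" for j s by (simp add: gm_def g_def)
  have I2: "of_nat k * c k = (\<Sum>j\<in>A. p j * gm j k)"
    using prod_I2[OF less.prems(1), of k p] by (simp add: c_def gm_def)
  have I1: "c s = (1 - p j) * g j s + p j * gm j s" if "j \<in> A" for j s
    using prod_I1[OF less.prems(1) that] by (simp add: c_def g_def gm_def)
  have "real N * c k = (\<Sum>j\<in>A. c k)" by (simp add: N_def)
  then have "real N * c k - of_nat k * c k = (\<Sum>j\<in>A. c k - p j * gm j k)"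
    unfolding I2 by (simp add: sum_subtractf)
  also have "\<dots> = (\<Sum>j\<in>A. (1 - p j) * g j k)"
    using I1 by (intro sum.cong) auto
  finally have A1: "real N * c k - of_nat k * c k = (\<Sum>j\<in>A. (1 - p j) * g j k)" .
  have "(real N - mu) * c (Suc k) = (\<Sum>j\<in>A. (1 - p j) * c (Suc k))"
    by (simp add: mu_def N_def sum_subtractf sum_distrib_right left_diff_distrib)
  also have "\<dots> = (\<Sum>j\<in>A. (1 - p j) * ((1 - p j) * g j (Suc k) + p j * g j k))"
    using I1 gmS by (intro sum.cong) auto
  finally have A2: "(real N - mu) * c (Suc k) = \<dots>" .
  have D: "(real N * c k - of_nat k * c k) - (real N - mu) * c (Suc k) = (\<Sum>j\<in>A. (1 - p j)^2 * (g j k - g j (Suc k)))"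
    unfolding A1 A2 sum_subtractf[symmetric]
    by (intro sum.cong) (auto simp: algebra_simps power2_eq_square)
  have Ane: "A \<noteq> {}" using less.prems(3) by auto
  have pos: "(1 - p j)^2 * (g j k - g j (Suc k)) > 0" if "j \<in> A" for j
  proof -
    have pj: "0 < p j" "p j < 1" using less.prems(2) that by auto
    have cA: "card (A - {j}) = N - 1" using less.prems(1) that by (simp add: N_def)
    have "g j k > g j (Suc k)"
    proof (cases "Suc k \<le> card (A - {j})")
      case True
      have cardlt: "card (A - {j}) < card A"
        using less.prems(1) that by (rule card_Diff1_less)
      have sumd: "(\<Sum>i\<in>A-{j}. p i) = mu - p j"
        using less.prems(1) that by (simp add: mu_def sum_diff1)
      have "(\<Sum>i\<in>A-{j}. p i) \<le> real k"
        unfolding sumd using less.prems(4) pj by (simp add: mu_def)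
      from less.hyps[OF cardlt, of k] this True less.prems(1,2)
      show ?thesis by (auto simp: g_def)
    next
      case False
      then have "card (A - {j}) = k" using cA less.prems(3) N_def by auto
      then show ?thesis using prod_top[of "A - {j}" p] less.prems(1,2) by (auto simp: g_def)
    qed
    then show ?thesis using pj by simp
  qed
  have "(\<Sum>j\<in>A. (1 - p j)^2 * (g j k - g j (Suc k))) > 0"
    using Ane less.prems(1) pos by (intro sum_pos) auto
  moreover have "c (Suc k) \<ge> 0" unfolding c_def
    using less.prems(2) by (intro prod_nonneg_coeff less.prems(1)) auto
  moreover have "mu \<le> real k" using less.prems(4) by (simp add: mu_def)
  moreover have "real k < real N" using less.prems(3) N_def by simp
  ultimately have "(real N - real k) * (c k - c (Suc k)) > 0"
    using D by (smt (verit, ccfv_SIG) mult_right_mono right_diff_distrib left_diff_distrib)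
  then have "c k > c (Suc k)" using \<open>real k < real N\<close> by (simp add: zero_less_mult_iff)
  then show ?case by (simp add: c_def)
qed

definition mm :: "nat \<Rightarrow> nat" where "mm n = n div 2 + 1"

fun QQ :: "nat \<Rightarrow> real poly" where
  "QQ 0 = 1"
| "QQ (Suc 0) = 1"
| "QQ (Suc (Suc k)) = (if odd (Suc k)
     then [:1, of_nat (mm (Suc k)) - 1:] * QQ (Suc k) + [:0,1,-1:] * pderiv (QQ (Suc k))
     else [:1, of_nat (mm (Suc k)), of_nat (mm (Suc k)) - 2:] * QQ (Suc k) + [:0,1,0,-1:] * pderiv (QQ (Suc k)))"

lemma id_odd:
  fixes x E q q' :: real and m :: nat
  shows "(1 + real (Suc (2*m)) * x^2) * ((1+x) * E * q) + x * (1 - x^2) * ((1+x) * E * q' + q * (real (Suc m) * E))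
    = (1+x)^2 * E * ((1 + real m * x) * q + (x - x^2) * q')"
  by (simp add: algebra_simps power2_eq_square)

lemma id_even:
  fixes x E q q' :: real and m :: nat
  shows "(1 + real (2*m) * x^2) * ((1+x) * E * q) + x * (1 - x^2) * ((1+x) * E * q' + q * (real (Suc m) * E))
    = (1+x) * E * ((1 + real (Suc m) * x + (real (Suc m) - 2) * x^2) * q + (x - x^3) * q')"
  by (simp add: algebra_simps power2_eq_square power3_eq_cube)

lemma RQ: "n \<ge> 1 \<Longrightarrow> RR n = [:1,1:]^(mm n) * QQ n"
proof (induction n rule: nat_induct_at_least)
  case base then show ?case by (simp add: mm_def)
next
  case (Suc n)
  obtain m where m: "mm n = Suc m" by (simp add: mm_def)
  obtain k where k: "n = Suc k" using Suc.hyps by (cases n) auto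
  define Q where "Q = QQ n"
  have pd: "poly (pderiv (RR n)) x = (1+x) * (1+x)^m * poly (pderiv Q) x + poly Q x * (real (Suc m) * (1+x)^m)" for x
  proof -
    have "pderiv ([:1,1:]^Suc m :: real poly) = smult (of_nat (Suc m)) ([:1,1:]^m) * pderiv [:1,1:]"
      by (rule pderiv_power_Suc)
    also have "pderiv [:1,1:] = (1 :: real poly)" by (simp add: pderiv_pCons)
    finally have pp: "pderiv ([:1,1:]^Suc m :: real poly) = smult (of_nat (Suc m)) ([:1,1:]^m)" by simp
    show ?thesis unfolding Suc.IH m Q_def pderiv_mult pp
      by (simp del: power_Suc add: power_Suc[symmetric])
  qed
  have pr: "poly (RR n) x = (1+x) * (1+x)^m * poly Q x" for x
    unfolding Suc.IH m Q_def by (simp add: algebra_simps)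
  have rec: "RR (Suc n) = (1 + smult (of_nat n) ([:0, 1:] ^ 2)) * RR n + [:0, 1:] * (1 - [:0, 1:] ^ 2) * pderiv (RR n)"
    using k by simp
  have ev: "poly (RR (Suc n)) x = (1 + real n * x^2) * ((1+x) * (1+x)^m * poly Q x) + x*(1-x^2)*((1+x) * (1+x)^m * poly (pderiv Q) x + poly Q x * (real (Suc m) * (1+x)^m))" for x
    unfolding pr[symmetric] pd[symmetric] rec by (simp add: algebra_simps power2_eq_square)
  show ?case
  proof (cases "odd n")
    case True
    then have nm: "n = Suc (2*m)" using m by (auto simp: mm_def elim!: oddE)
    have mS: "mm (Suc n) = Suc (Suc m)" using nm by (simp add: mm_def)
    have qs: "QQ (Suc n) = [:1, of_nat m:] * Q + [:0,1,-1:] * pderiv Q"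
      using True k m by (simp add: Q_def)
    show ?thesis
    proof (rule poly_ext)
      fix x
      have r: "poly ([:1,1:]^(mm (Suc n)) * QQ (Suc n)) x = (1+x)^2 * (1+x)^m * ((1 + real m * x) * poly Q x + (x - x^2) * poly (pderiv Q) x)"
        unfolding mS qs by (simp add: algebra_simps power2_eq_square)
      show "poly (RR (Suc n)) x = poly ([:1,1:]^(mm (Suc n)) * QQ (Suc n)) x"
        unfolding r ev using id_odd[of m x "(1+x)^m" "poly Q x" "poly (pderiv Q) x"] nm by simp
    qed
  next
    case False
    then have nm: "n = 2*m" using m by (auto simp: mm_def elim!: evenE)
    have mS: "mm (Suc n) = Suc m" using nm by (simp add: mm_def)
    have qs: "QQ (Suc n) = [:1, of_nat (Suc m), of_nat (Suc m) - 2:] * Q + [:0,1,0,-1:] * pderiv Q"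
      using False k m by (simp add: Q_def)
    show ?thesis
    proof (rule poly_ext)
      fix x
      have r: "poly ([:1,1:]^(mm (Suc n)) * QQ (Suc n)) x = (1+x) * (1+x)^m * ((1 + real (Suc m) * x + (real (Suc m) - 2) * x^2) * poly Q x + (x - x^3) * poly (pderiv Q) x)"
        unfolding mS qs by (simp add: algebra_simps power2_eq_square power3_eq_cube)
      show "poly (RR (Suc n)) x = poly ([:1,1:]^(mm (Suc n)) * QQ (Suc n)) x"
        unfolding r ev using id_even[of m x "(1+x)^m" "poly Q x" "poly (pderiv Q) x"] nm by simp
    qed
  qed
qed

lemma IVT_points:
  fixes P :: "real poly"
  assumes "\<forall>i<K. t i < t (Suc i)" "\<forall>i\<le>K. (-1)^(K-i) * poly P (t i) > 0"
  shows "\<exists>s. \<forall>i<K. t i < s i \<and> s i < t (Suc i) \<and> poly P (s i) = 0"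
proof -
  have "\<exists>x. t i < x \<and> x < t (Suc i) \<and> poly P x = 0" if "i < K" for i
  proof -
    define e :: real where "e = (-1)^(K - Suc i)"
    have e2: "e * e = 1" unfolding e_def by (simp flip: power_add)
    have ki: "K - i = Suc (K - Suc i)" using that by simp
    have a0: "(-1)^(K-i) * poly P (t i) > 0" "(-1)^(K - Suc i) * poly P (t (Suc i)) > 0"
      using assms(2) that by auto
    have a: "- e * poly P (t i) > 0" "e * poly P (t (Suc i)) > 0"
      using a0 unfolding ki e_def by auto
    have "(- e * poly P (t i)) * (e * poly P (t (Suc i))) > 0" using a by (rule mult_pos_pos)
    then have "- (e * e) * (poly P (t i) * poly P (t (Suc i))) > 0" by (simp add: algebra_simps)
    then have "poly P (t i) * poly P (t (Suc i)) < 0" using e2 by simp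
    then show ?thesis using poly_IVT[of "t i" "t (Suc i)" P] assms(1) that by auto
  qed
  then have "\<forall>i. \<exists>x. i < K \<longrightarrow> t i < x \<and> x < t (Suc i) \<and> poly P x = 0" by blast
  then show ?thesis by (metis choice)
qed

lemma factor_roots:
  fixes s :: "nat \<Rightarrow> real"
  shows "degree P \<le> K \<Longrightarrow> (\<forall>i<K. poly P (s i) = 0) \<Longrightarrow> inj_on s {..<K} \<Longrightarrow> P = smult (coeff P K) (\<Prod>i<K. [:-s i,1:])"
proof (induction K arbitrary: P)
  case 0
  show ?case
  proof (intro poly_eqI)
    fix n
    show "coeff P n = coeff (smult (coeff P 0) (\<Prod>i<0. [:- s i, 1:])) n"
      using 0 by (cases n) (auto simp: coeff_eq_0)
  qed
next
  case (Suc K)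
  have "[:-s K, 1:] dvd P" using Suc.prems(2) poly_eq_0_iff_dvd by auto
  then obtain P1 where P: "P = [:-s K,1:] * P1" by (auto elim: dvdE)
  have dP1: "degree P1 \<le> K"
  proof (cases "P1 = 0")
    case False
    then have "degree P = 1 + degree P1" unfolding P by (subst degree_mult_eq) auto
    then show ?thesis using Suc.prems(1) by simp
  qed simp
  have roots: "\<forall>i<K. poly P1 (s i) = 0"
  proof (intro allI impI)
    fix i assume i: "i < K"
    have "s i \<noteq> s K" using Suc.prems(3) i by (auto simp: inj_on_def)
    moreover have "poly P (s i) = 0" using Suc.prems(2) i by auto
    ultimately show "poly P1 (s i) = 0" unfolding P by simp
  qed
  have inj: "inj_on s {..<K}" using Suc.prems(3) by (rule inj_on_subset) auto
  have IH: "P1 = smult (coeff P1 K) (\<Prod>i<K. [:-s i,1:])" using Suc.IH[OF dP1 roots inj] .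
  have cf: "coeff P (Suc K) = coeff P1 K"
    unfolding P using dP1 by (simp add: mult_pCons_left coeff_eq_0)
  show ?case unfolding cf
    by (subst P, subst IH) (simp add: prod.lessThan_Suc algebra_simps)
qed

lemma sign_pderiv:
  fixes r :: "nat \<Rightarrow> real"
  assumes mono: "\<forall>i j. i < j \<longrightarrow> j < d \<longrightarrow> r i < r j" and j: "j < d"
  shows "(-1)^(d - Suc j) * poly (pderiv (\<Prod>i<d. [:-r i,1:])) (r j) > 0"
proof -
  have pd1: "pderiv [:-r i, 1:] = 1" for i by (simp add: pderiv_pCons)
  have mij: "r a < r b" if "a < b" "b < d" for a b using mono that by blast
  have "poly (pderiv (\<Prod>i<d. [:-r i,1:])) (r j) = (\<Sum>a<d. \<Prod>i\<in>{..<d}-{a}. (r j - r i))"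
    by (simp add: pderiv_prod poly_sum poly_prod pd1)
  also have "\<dots> = (\<Prod>i\<in>{..<d}-{j}. (r j - r i)) + (\<Sum>a\<in>{..<d}-{j}. \<Prod>i\<in>{..<d}-{a}. (r j - r i))"
    using j by (subst sum.remove[of _ j]) auto
  also have "(\<Sum>a\<in>{..<d}-{j}. \<Prod>i\<in>{..<d}-{a}. (r j - r i)) = 0"
    using j by (intro sum.neutral ballI) (auto intro!: bexI[of _ j])
  also have "(\<Prod>i\<in>{..<d}-{j}. (r j - r i)) = (\<Prod>i\<in>{..<d}-{j}. (if i < j then 1 else -1) * \<bar>r j - r i\<bar>)"
  proof (intro prod.cong refl)
    fix i assume "i \<in> {..<d}-{j}"
    then have "i < d" "i \<noteq> j" by auto
    then show "r j - r i = (if i < j then 1 else -1) * \<bar>r j - r i\<bar>"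
      using mij[of i j] mij[of j i] j by (cases "i < j") (auto simp: abs_if)
  qed
  also have "\<dots> = (\<Prod>i\<in>{..<d}-{j}. (if i < j then 1 else -1 :: real)) * (\<Prod>i\<in>{..<d}-{j}. \<bar>r j - r i\<bar>)"
    by (rule prod.distrib)
  also have "(\<Prod>i\<in>{..<d}-{j}. (if i < j then 1 else -1 :: real)) = (-1)^(d - Suc j)"
  proof -
    have sp: "{..<d}-{j} = {..<j} \<union> {Suc j..<d}" using j by auto
    have "(\<Prod>i\<in>{..<d}-{j}. (if i < j then 1 else -1 :: real))
        = (\<Prod>i\<in>{..<j}. (if i < j then 1 else -1 :: real)) * (\<Prod>i\<in>{Suc j..<d}. (if i < j then 1 else -1 :: real))"
      unfolding sp by (rule prod.union_disjoint) auto
    also have "(\<Prod>i\<in>{..<j}. (if i < j then 1 else -1 :: real)) = 1" by (intro prod.neutral) auto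
    also have "(\<Prod>i\<in>{Suc j..<d}. (if i < j then 1 else -1 :: real)) = (\<Prod>i\<in>{Suc j..<d}. -1)"
      by (intro prod.cong) auto
    also have "\<dots> = (-1)^(d - Suc j)" by simp
    finally show ?thesis by simp
  qed
  finally have e: "poly (pderiv (\<Prod>i<d. [:-r i,1:])) (r j) = (-1)^(d - Suc j) * (\<Prod>i\<in>{..<d}-{j}. \<bar>r j - r i\<bar>)" by simp
  have "(\<Prod>i\<in>{..<d}-{j}. \<bar>r j - r i\<bar>) > 0"
  proof (intro prod_pos ballI)
    fix i assume "i \<in> {..<d}-{j}"
    then have "i < d" "i \<noteq> j" by auto
    then have "r i \<noteq> r j" using mij[of i j] mij[of j i] j by (cases "i < j") auto
    then show "\<bar>r j - r i\<bar> > 0" by simp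
  qed
  moreover have "(-1::real)^(d - Suc j) * (-1)^(d - Suc j) = 1" by (simp flip: power_add)
  ultimately show ?thesis unfolding e by (simp add: mult.assoc[symmetric])
qed

lemma coeff_lin1: "coeff ([:a,b:] * p) i = a * coeff p i + (if i = 0 then 0 else b * coeff p (i-1))"
  by (cases i) (auto simp: mult_pCons_left)

lemma coeff_lin2: "coeff ([:a,b,e:] * p) i = a * coeff p i + (if i = 0 then 0 else b * coeff p (i-1)) + (if i \<le> 1 then 0 else e * coeff p (i-2))"
  by (cases i; cases "i - 1") (auto simp: mult_pCons_left algebra_simps)

lemma coeff_d1: "coeff ([:0,1,-1:] * pderiv p) i = (if i = 0 then 0 else of_nat i * coeff p i) - (if i \<le> 1 then 0 else of_nat (i-1) * coeff (p::real poly) (i-1))"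
  by (cases i; cases "i - 1") (auto simp: mult_pCons_left coeff_pderiv)

lemma coeff_d2: "coeff ([:0,1,0,-1:] * pderiv p) i = (if i = 0 then 0 else of_nat i * coeff p i) - (if i \<le> 2 then 0 else of_nat (i-2) * coeff (p::real poly) (i-2))"
  by (cases i; cases "i - 1"; cases "i - 2") (auto simp: mult_pCons_left coeff_pderiv)

definition dd :: "nat \<Rightarrow> nat" where "dd n = n - mm n"

lemma finish:
  fixes P :: "real poly"
  assumes "degree P \<le> K" "\<forall>i<K. t i < s i \<and> s i < t (Suc i) \<and> poly P (s i) = 0"
    "\<forall>i. t i \<le> t (Suc i)" "\<forall>i. -1 \<le> t i \<and> t i \<le> 0" "poly P 0 > 0"
  shows "\<exists>c r. c > 0 \<and> (\<forall>i<K. -1 < r i \<and> r i < 0) \<and> (\<forall>i j. i<j \<longrightarrow> j<K \<longrightarrow> r i < r j) \<and> P = smult c (\<Prod>i<K. [:-r i,1:])"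
proof -
  have tstep: "t n \<le> t (Suc n)" for n using assms(3) by blast
  have tm: "t a \<le> t b" if "a \<le> b" for a b
    using tstep that by (rule lift_Suc_mono_le)
  have sb: "t i < s i" "s i < t (Suc i)" "poly P (s i) = 0" if "i < K" for i
    using assms(2) that by blast+
  have mono: "s i < s j" if "i < j" "j < K" for i j
  proof -
    have "s i < t (Suc i)" using sb(2)[of i] that by simp
    moreover have "t (Suc i) \<le> t j" using tm[of "Suc i" j] that by simp
    moreover have "t j < s j" using sb(1)[of j] that by simp
    ultimately show "s i < s j" by linarith
  qed
  have inj: "inj_on s {..<K}"
  proof (rule inj_onI)
    fix a b assume ab: "a \<in> {..<K}" "b \<in> {..<K}" "s a = s b"
    show "a = b"
    proof (rule ccontr)
      assume "a \<noteq> b"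
      then have "a < b \<or> b < a" by linarith
      then show False using mono[of a b] mono[of b a] ab by auto
    qed
  qed
  have rng: "-1 < s i \<and> s i < 0" if "i < K" for i
  proof -
    have "t i < s i" "s i < t (Suc i)" using sb that by auto
    moreover have "-1 \<le> t i" "t (Suc i) \<le> 0" using assms(4) by blast+
    ultimately show ?thesis by linarith
  qed
  define c where "c = coeff P K"
  have Pf: "P = smult c (\<Prod>i<K. [:-s i,1:])"
    unfolding c_def using assms(1) _ inj by (rule factor_roots) (use sb in blast)
  have "poly P 0 = poly (smult c (\<Prod>i<K. [:-s i,1:])) 0"
    using Pf by (rule arg_cong)
  also have "\<dots> = c * (\<Prod>i<K. - s i)" by (simp add: poly_prod)
  finally have p0: "poly P 0 = c * (\<Prod>i<K. - s i)" .
  have "(\<Prod>i<K. - s i) > 0" using rng by (intro prod_pos) auto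
  then have cpos: "c > 0" using assms(5) p0 by (simp add: zero_less_mult_iff)
  show ?thesis
    by (rule exI[of _ c], rule exI[of _ s]) (use cpos rng mono Pf in blast)
qed

lemma QQ_roots:
  "n \<ge> 1 \<Longrightarrow> \<exists>c r. c > 0 \<and> (\<forall>i<dd n. -1 < r i \<and> r i < 0) \<and> (\<forall>i j. i < j \<longrightarrow> j < dd n \<longrightarrow> r i < r j) \<and> QQ n = smult c (\<Prod>i<dd n. [:-r i,1:])"
proof (induction n rule: nat_induct_at_least)
  case base
  show ?case by (rule exI[of _ 1], rule exI[of _ "\<lambda>_. 0"]) (simp add: dd_def mm_def)
next
  case (Suc n)
  define d where "d = dd n"
  from Suc.IH obtain c r where c: "c > 0" and rr: "\<forall>i<d. -1 < r i \<and> r i < 0"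
    and mono: "\<forall>i j. i<j \<longrightarrow> j<d \<longrightarrow> r i < r j" and Qf: "QQ n = smult c (\<Prod>i<d. [:-r i,1:])"
    unfolding d_def by blast
  obtain k where k: "n = Suc k" using Suc.hyps by (cases n) auto
  obtain m where m: "mm n = Suc m" by (simp add: mm_def)
  define Q where "Q = QQ n"
  have Qroot: "poly Q (r j) = 0" if "j < d" for j
    unfolding Q_def Qf using that by (auto simp: poly_prod)
  have Qsign: "(-1)^(d - Suc j) * poly (pderiv Q) (r j) > 0" if "j<d" for j
  proof -
    have "(-1)^(d - Suc j) * poly (pderiv Q) (r j) = c * ((-1)^(d - Suc j) * poly (pderiv (\<Prod>i<d. [:-r i,1:])) (r j))"
      unfolding Q_def Qf by (simp add: pderiv_smult)
    then show ?thesis using sign_pderiv[OF mono that] c by (metis mult.left_commute mult_pos_pos)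
  qed
  have Q0: "poly Q 0 > 0"
  proof -
    have "poly Q 0 = c * (\<Prod>i<d. - r i)" unfolding Q_def Qf by (simp add: poly_prod)
    moreover have "(\<Prod>i<d. - r i) > 0" using rr by (intro prod_pos) auto
    ultimately show ?thesis using c by simp
  qed
  have Qm1: "(-1)^d * poly Q (-1) > 0"
  proof -
    have "(\<Prod>i<d. -1 - r i) = (\<Prod>i<d. (-1) * (1 + r i))" by (intro prod.cong) auto
    also have "\<dots> = (\<Prod>i<d. (-1::real)) * (\<Prod>i<d. 1 + r i)" by (rule prod.distrib)
    also have "\<dots> = (-1)^d * (\<Prod>i<d. 1 + r i)" by simp
    finally have e: "(\<Prod>i<d. -1 - r i) = (-1)^d * (\<Prod>i<d. 1 + r i)" .
    have "(-1)^d * poly Q (-1) = c * ((-1)^d * (-1)^d * (\<Prod>i<d. 1 + r i))"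
      unfolding Q_def Qf by (simp add: poly_prod e algebra_simps)
    also have "(-1::real)^d * (-1)^d = 1" by (simp flip: power_add)
    finally have "(-1)^d * poly Q (-1) = c * (\<Prod>i<d. 1 + r i)" by simp
    moreover have "(\<Prod>i<d. 1 + r i) > 0" using rr by (intro prod_pos) (auto simp: add.commute)
    ultimately show ?thesis using c by simp
  qed
  have Qdeg: "degree Q \<le> d"
  proof -
    have "degree Q \<le> degree (\<Prod>i<d. [:-r i,1:])" unfolding Q_def Qf by (rule degree_smult_le)
    also have "\<dots> \<le> (\<Sum>i<d. degree [:-r i,1:])" using degree_prod_sum_le[of "{..<d}" "\<lambda>i. [:-r i,1:]"] by (simp add: o_def)
    also have "\<dots> = d" by simp
    finally show ?thesis .
  qed
  have Qz: "coeff Q i = 0" if "i > d" for i using Qdeg that by (simp add: coeff_eq_0)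
  show ?case
  proof (cases "odd n")
    case True
    then have nm: "n = Suc (2*m)" using m by (auto simp: mm_def elim!: oddE)
    have dm: "d = m" using nm by (simp add: d_def dd_def mm_def)
    have dS: "dd (Suc n) = d" using nm dm by (simp add: dd_def mm_def)
    have qs: "QQ (Suc n) = [:1, of_nat m:] * Q + [:0,1,-1:] * pderiv Q"
      using True k m by (simp add: Q_def)
    define t where "t i = (if i < d then r i else 0)" for i
    have sg: "\<forall>i\<le>d. (-1)^(d-i) * poly (QQ (Suc n)) (t i) > 0"
    proof (intro allI impI)
      fix i assume i: "i \<le> d"
      show "(-1)^(d-i) * poly (QQ (Suc n)) (t i) > 0"
      proof (cases "i < d")
        case True
        have ki: "d - i = Suc (d - Suc i)" using True by simp
        have B: "r i - r i * r i < 0" using rr True by (smt (verit) mult_neg_neg)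
        have "(-1)^(d-i) * poly (QQ (Suc n)) (t i) = (-(r i - r i * r i)) * ((-1)^(d - Suc i) * poly (pderiv Q) (r i))"
          unfolding qs ki t_def using True Qroot[OF True] by (simp add: algebra_simps)
        then show ?thesis using B Qsign[OF True] by simp
      next
        case False
        then have "i = d" using i by simp
        then show ?thesis unfolding qs t_def using Q0 by simp
      qed
    qed
    have st: "\<forall>i<d. t i < t (Suc i)" using mono rr by (auto simp: t_def)
    obtain s where s: "\<forall>i<d. t i < s i \<and> s i < t (Suc i) \<and> poly (QQ (Suc n)) (s i) = 0"
      using IVT_points[OF st sg] by blast
    have tmono: "\<forall>i. t i \<le> t (Suc i)" using mono rr by (auto simp: t_def less_imp_le)
    have trng: "\<forall>i. -1 \<le> t i \<and> t i \<le> 0" using rr by (auto simp: t_def less_imp_le)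
    have deg: "degree (QQ (Suc n)) \<le> d"
    proof (rule degree_le, intro allI impI)
      fix i assume "d < i"
      then show "coeff (QQ (Suc n)) i = 0"
        unfolding qs coeff_add coeff_lin1 coeff_d1 using Qz dm
        by (cases "i = Suc d") auto
    qed
    have Q0': "poly (QQ (Suc n)) 0 > 0" unfolding qs using Q0 by simp
    show ?thesis unfolding dS using finish[OF deg s tmono trng Q0'] by blast
  next
    case False
    then have nm: "n = 2*m" using m by (auto simp: mm_def elim!: evenE)
    have m1: "m \<ge> 1" using nm k by simp
    have dm: "d = m - 1" using nm by (simp add: d_def dd_def mm_def)
    have dS: "dd (Suc n) = Suc d" using nm dm m1 by (simp add: dd_def mm_def)
    have qs: "QQ (Suc n) = [:1, of_nat (Suc m), of_nat (Suc m) - 2:] * Q + [:0,1,0,-1:] * pderiv Q"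
      using False k m by (simp add: Q_def)
    define t where "t i = (if i = 0 then -1 else if i - 1 < d then r (i - 1) else 0)" for i
    have pQ': "poly (QQ (Suc n)) x = (1 + real (Suc m) * x + (real (Suc m) - 2) * x^2) * poly Q x + (x - x^3) * poly (pderiv Q) x" for x
      unfolding qs by (simp add: algebra_simps power2_eq_square power3_eq_cube)
    have sg: "\<forall>i\<le>Suc d. (-1)^(Suc d-i) * poly (QQ (Suc n)) (t i) > 0"
    proof (intro allI impI)
      fix i assume i: "i \<le> Suc d"
      show "(-1)^(Suc d-i) * poly (QQ (Suc n)) (t i) > 0"
      proof (cases i)
        case 0
        have t0: "t i = -1" using 0 by (simp add: t_def)
        have e1: "(1 + real (Suc m) * (-1) + (real (Suc m) - 2) * (-1)^2 :: real) = -1" by simp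
        have e2: "((-1) - (-1)^3 :: real) = 0" by simp
        have v: "poly (QQ (Suc n)) (t i) = - poly Q (-1)" unfolding t0 pQ' e1 e2 by simp
        have pw: "(-1::real)^(Suc d - i) = - ((-1)^d)" using 0 by simp
        have "(-1)^(Suc d-i) * poly (QQ (Suc n)) (t i) = (-1)^d * poly Q (-1)"
          unfolding v pw by simp
        then show ?thesis using Qm1 by simp
      next
        case (Suc i')
        show ?thesis
        proof (cases "i' < d")
          case True
          have ti: "t i = r i'" using Suc True by (simp add: t_def)
          have ki: "Suc d - i = Suc (d - Suc i')" using True Suc by simp
          have B: "r i' - r i' ^ 3 < 0"
          proof -
            have a1: "0 < - r i'" "- r i' < 1" using rr True by auto
            have "(- r i') * (- r i') < (- r i') * 1" using a1 by (intro mult_strict_left_mono) auto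
            then have "r i' * r i' < 1" using a1 by simp
            then have "0 < 1 - r i' * r i'" by simp
            then have "r i' * (1 - r i' * r i') < 0" using a1 by (intro mult_neg_pos) auto
            then show ?thesis by (simp add: algebra_simps power3_eq_cube)
          qed
          have pv: "poly (QQ (Suc n)) (r i') = (r i' - r i' ^ 3) * poly (pderiv Q) (r i')"
            unfolding pQ' using Qroot[OF True] by simp
          have "(-1)^(Suc d-i) * poly (QQ (Suc n)) (t i) = (-(r i' - r i' ^ 3)) * ((-1)^(d - Suc i') * poly (pderiv Q) (r i'))"
            unfolding ti ki pv by (simp add: algebra_simps)
          then show ?thesis using B Qsign[OF True] by simp
        next
          case False
          then have "i = Suc d" using i Suc by simp
          then have "t i = 0" by (simp add: t_def)
          moreover have "poly (QQ (Suc n)) 0 = poly Q 0" unfolding pQ' by simp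
          ultimately show ?thesis using Q0 \<open>i = Suc d\<close> by simp
        qed
      qed
    qed
    have st: "\<forall>i<Suc d. t i < t (Suc i)"
    proof (intro allI impI)
      fix i assume "i < Suc d"
      then show "t i < t (Suc i)" using mono rr
        by (cases i) (auto simp: t_def)
    qed
    obtain s where s: "\<forall>i<Suc d. t i < s i \<and> s i < t (Suc i) \<and> poly (QQ (Suc n)) (s i) = 0"
      using IVT_points[OF st sg] by blast
    have tmono: "\<forall>i. t i \<le> t (Suc i)"
    proof
      fix i show "t i \<le> t (Suc i)" using mono rr by (cases i) (auto simp: t_def less_imp_le)
    qed
    have trng: "\<forall>i. -1 \<le> t i \<and> t i \<le> 0" using rr by (auto simp: t_def less_imp_le)
    have deg: "degree (QQ (Suc n)) \<le> Suc d"
    proof (rule degree_le, intro allI impI)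
      fix i assume "Suc d < i"
      then show "coeff (QQ (Suc n)) i = 0"
        unfolding qs coeff_add coeff_lin2 coeff_d2 using Qz dm m1
        by (cases "i = Suc (Suc d)") (auto simp: of_nat_diff)
    qed
    have Q0': "poly (QQ (Suc n)) 0 > 0" unfolding qs using Q0 by simp
    show ?thesis unfolding dS using finish[OF deg s tmono trng Q0'] by blast
  qed
qed

lemma RR_factor:
  assumes "n \<ge> 1"
  shows "\<exists>C p. C > 0 \<and> (\<forall>j<n. 0 < p j \<and> p j < 1) \<and> RR n = smult C (\<Prod>j<n. lf (p j))"
proof -
  define m where "m = mm n"
  define d where "d = dd n"
  have nmd: "n = d + m" using assms by (simp add: d_def m_def dd_def mm_def)
  obtain c r where c: "c > 0" and rr: "\<forall>i<d. -1 < r i \<and> r i < 0"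
    and Qf: "QQ n = smult c (\<Prod>i<d. [:-r i,1:])"
    using QQ_roots[OF assms] unfolding d_def by blast
  define p where "p j = (if j < d then 1 / (1 - r j) else 1/2)" for j
  define C where "C = c * (\<Prod>i<d. 1 - r i) * 2^m"
  have rpos: "1 - r i > 0" if "i < d" for i using rr that by auto
  have Cpos: "C > 0" unfolding C_def using c rpos by (intro mult_pos_pos prod_pos) auto
  have pr: "0 < p j \<and> p j < 1" if "j < n" for j
  proof (cases "j < d")
    case True
    then have "1 < 1 - r j" using rr by auto
    then show ?thesis using True by (simp add: p_def divide_less_eq)
  qed (simp add: p_def)
  have "RR n = smult C (\<Prod>j<n. lf (p j))"
  proof (rule poly_ext)
    fix x :: real
    have sp: "{..<n} = {..<d} \<union> {d..<n}" using nmd by auto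
    have "(\<Prod>j<n. poly (lf (p j)) x) = (\<Prod>j<d. poly (lf (p j)) x) * (\<Prod>j\<in>{d..<n}. poly (lf (p j)) x)"
      unfolding sp by (rule prod.union_disjoint) auto
    also have "(\<Prod>j<d. poly (lf (p j)) x) = (\<Prod>j<d. (x - r j) / (1 - r j))"
    proof (intro prod.cong refl)
      fix j assume "j \<in> {..<d}"
      then have j: "j < d" by simp
      then have ne: "1 - r j \<noteq> 0" using rpos by force
      have pj: "p j = 1 / (1 - r j)" using j by (simp add: p_def)
      have q: "p j * (1 - r j) = 1" using ne by (simp add: pj)
      have "(1 - p j + p j * x) * (1 - r j) = (1 - r j) - p j * (1 - r j) + x * (p j * (1 - r j))"
        by (simp add: algebra_simps)
      also have "\<dots> = x - r j" unfolding q by simp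
      finally have "(1 - p j + p j * x) * (1 - r j) = x - r j" .
      then show "poly (lf (p j)) x = (x - r j) / (1 - r j)"
        using ne by (simp add: eq_divide_eq)
    qed
    also have "\<dots> = (\<Prod>j<d. x - r j) / (\<Prod>j<d. 1 - r j)" by (rule prod_dividef)
    also have "(\<Prod>j\<in>{d..<n}. poly (lf (p j)) x) = (\<Prod>j\<in>{d..<n}. (1 + x) / 2)"
      by (intro prod.cong refl) (simp add: p_def field_simps)
    also have "\<dots> = ((1 + x)/2)^m" using nmd by simp
    finally have e: "(\<Prod>j<n. poly (lf (p j)) x) = (\<Prod>j<d. x - r j) / (\<Prod>j<d. 1 - r j) * ((1 + x)/2)^m" .
    have nz: "(\<Prod>j<d. 1 - r j) \<noteq> 0" using rpos by (simp add: prod_zero_iff) (metis less_irrefl lessThan_iff)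
    have "poly (RR n) x = (1 + x)^m * (c * (\<Prod>j<d. x - r j))"
      using RQ[OF assms] Qf unfolding m_def by (simp add: poly_prod)
    also have "\<dots> = C * ((\<Prod>j<d. x - r j) / (\<Prod>j<d. 1 - r j) * ((1 + x)/2)^m)"
      unfolding C_def using nz by (simp add: field_simps power_divide)
    also have "\<dots> = poly (smult C (\<Prod>j<n. lf (p j))) x"
      by (simp only: poly_smult poly_prod e)
    finally show "poly (RR n) x = poly (smult C (\<Prod>j<n. lf (p j))) x" .
  qed
  then show ?thesis using Cpos pr by blast
qed

lemma RR_rec_vals:
  assumes "n \<ge> 1"
  shows "poly (RR (Suc n)) 1 = (1 + real n) * poly (RR n) 1"
    "poly (pderiv (RR (Suc n))) 1 = 2 * real n * poly (RR n) 1 + (real n - 1) * poly (pderiv (RR n)) 1"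
proof -
  obtain k where k: "n = Suc k" using assms by (cases n) auto
  have rec: "RR (Suc n) = (1 + smult (of_nat n) ([:0, 1:] ^ 2)) * RR n + [:0, 1:] * (1 - [:0, 1:] ^ 2) * pderiv (RR n)"
    using k by simp
  show "poly (RR (Suc n)) 1 = (1 + real n) * poly (RR n) 1"
    unfolding rec by simp
  show "poly (pderiv (RR (Suc n))) 1 = 2 * real n * poly (RR n) 1 + (real n - 1) * poly (pderiv (RR n)) 1"
    unfolding rec by (simp add: pderiv_mult pderiv_add pderiv_diff pderiv_minus pderiv_smult pderiv_power_Suc pderiv_pCons numeral_2_eq_2 algebra_simps)
qed

lemma RR_mean:
  assumes "n \<ge> 2"
  shows "3 * poly (pderiv (RR n)) 1 = (2 * real n - 1) * poly (RR n) 1"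
  using assms
proof (induction n rule: nat_induct_at_least)
  case base
  have a1: "poly (RR 1) 1 = 2" by simp
  have b1: "poly (pderiv (RR 1)) 1 = 1" by (simp add: pderiv_pCons)
  show ?case using RR_rec_vals[of 1] a1 b1 by (simp add: numeral_2_eq_2)
next
  case (Suc n)
  have n1: "n \<ge> 1" using Suc.hyps by simp
  define a where "a = poly (RR n) 1"
  define b where "b = poly (pderiv (RR n)) 1"
  have A: "poly (RR (Suc n)) 1 = (1 + real n) * a" using RR_rec_vals(1)[OF n1] by (simp add: a_def)
  have B: "poly (pderiv (RR (Suc n))) 1 = 2 * real n * a + (real n - 1) * b" using RR_rec_vals(2)[OF n1] by (simp add: a_def b_def)
  have IH: "3 * b = (2 * real n - 1) * a" using Suc.IH by (simp add: a_def b_def)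
  have "3 * poly (pderiv (RR (Suc n))) 1 = 6 * real n * a + (real n - 1) * (3 * b)" unfolding B by (simp add: algebra_simps)
  also have "\<dots> = 6 * real n * a + (real n - 1) * ((2 * real n - 1) * a)" unfolding IH ..
  also have "\<dots> = (2 * real (Suc n) - 1) * ((1 + real n) * a)" by (simp add: algebra_simps)
  finally show ?case unfolding A .
qed

lemma lf_prod_vals:
  assumes "finite A"
  shows "poly (\<Prod>j\<in>A. lf (p j)) 1 = 1" "poly (pderiv (\<Prod>j\<in>A. lf (p j))) 1 = (\<Sum>j\<in>A. p j)"
proof -
  show "poly (\<Prod>j\<in>A. lf (p j)) 1 = 1" by (simp add: poly_prod)
  show "poly (pderiv (\<Prod>j\<in>A. lf (p j))) 1 = (\<Sum>j\<in>A. p j)"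
    by (simp add: pderiv_prod poly_sum poly_prod)
qed


theorem mainTheorem7:
  fixes n i :: nat
  assumes "n \<ge> 1"
    and "i \<le> n"
    and "Rnk n i = Max ((\<lambda>k. Rnk n k) ` {0..n})"
  shows "(if (2 * real n - 1) / 3 \<in> \<int>
          then real i = (2 * real n - 1) / 3
          else (int i = \<lfloor>(2 * real n - 1) / 3\<rfloor> \<or> int i = \<lceil>(2 * real n - 1) / 3\<rceil>))"
proof -
  have maxi: "Rnk n k \<le> Rnk n i" if "k \<le> n" for k
  proof -
    have "Rnk n k \<le> Max ((\<lambda>k. Rnk n k) ` {0..n})" using that by (intro Max_ge) auto
    then show ?thesis using assms(3) by simp
  qed
  define x where "x = (2 * real n - 1) / 3"
  have bounds: "x - 1 < real i \<and> real i < x + 1"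
  proof (cases "n = 1")
    case True
    then show ?thesis using assms(2) by (simp add: x_def)
  next
    case False
    then have n2: "n \<ge> 2" using assms(1) by simp
    obtain C p where C: "C > 0" and pr: "\<forall>j<n. 0 < p j \<and> p j < 1"
      and RRf: "RR n = smult C (\<Prod>j<n. lf (p j))"
      using RR_factor[OF assms(1)] by blast
    define P where "P = (\<Prod>j<n. lf (p j))"
    have cf: "real_of_int (Rnk n k) = C * coeff P k" for k
      unfolding Rnk_def RR_coeff[symmetric] RRf P_def by simp
    have prA: "\<forall>j\<in>{..<n}. 0 < p j \<and> p j < 1" using pr by simp
    have mu: "(\<Sum>j<n. p j) = x"
    proof -
      have "3 * poly (pderiv (RR n)) 1 = (2 * real n - 1) * poly (RR n) 1" by (rule RR_mean[OF n2])
      then have "3 * (C * (\<Sum>j<n. p j)) = (2 * real n - 1) * C"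
        unfolding RRf pderiv_smult poly_smult lf_prod_vals[OF finite_lessThan] by simp
      then have "C * (3 * (\<Sum>j<n. p j)) = C * (2 * real n - 1)" by (simp add: algebra_simps)
      then have "3 * (\<Sum>j<n. p j) = 2 * real n - 1" using C by simp
      then show ?thesis by (simp add: x_def)
    qed
    have xn: "x < real n" using x_def by simp
    have c1: "\<not> real (Suc i) \<le> x"
    proof
      assume h: "real (Suc i) \<le> x"
      then have si: "Suc i \<le> n" using xn by simp
      have "coeff P (Suc i - 1) < coeff P (Suc i)"
        unfolding P_def by (rule darroch1[OF finite_lessThan prA]) (use h mu in auto)
      then have "C * coeff P i < C * coeff P (Suc i)" using C by simp
      then have "Rnk n i < Rnk n (Suc i)" unfolding cf[symmetric] by simp
      then show False using maxi[OF si] by simp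
    qed
    have c2: "\<not> (1 \<le> i \<and> x \<le> real (i - 1))"
    proof
      assume h: "1 \<le> i \<and> x \<le> real (i - 1)"
      have si: "Suc (i - 1) = i" using h by simp
      have "coeff P (Suc (i - 1)) < coeff P (i - 1)"
        unfolding P_def by (rule darroch2[OF finite_lessThan prA]) (use h mu assms(2) in auto)
      then have "C * coeff P i < C * coeff P (i - 1)" using C si by simp
      then have "Rnk n i < Rnk n (i - 1)" unfolding cf[symmetric] by simp
      moreover have "i - 1 \<le> n" using assms(2) by simp
      ultimately show False using maxi[of "i - 1"] by simp
    qed
    have "x > 0" using n2 x_def by simp
    then show ?thesis using c1 c2 by (cases i) auto
  qed
  have "if x \<in> \<int> then real i = x else (int i = \<lfloor>x\<rfloor> \<or> int i = \<lceil>x\<rceil>)"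
  proof (cases "x \<in> \<int>")
    case True
    then obtain z where z: "x = of_int z" by (auto elim: Ints_cases)
    have "real_of_int (z - 1) < real_of_int (int i)" "real_of_int (int i) < real_of_int (z + 1)"
      using bounds z by auto
    then have "z - 1 < int i" "int i < z + 1" by (simp_all only: of_int_less_iff)
    then have "int i = z" by simp
    then show ?thesis using True z by simp
  next
    case False
    have fl: "real_of_int \<lfloor>x\<rfloor> \<le> x" "x < real_of_int \<lfloor>x\<rfloor> + 1" by linarith+
    have ne: "real_of_int \<lfloor>x\<rfloor> \<noteq> x" using False by (metis Ints_of_int)
    have lt: "real_of_int \<lfloor>x\<rfloor> < x" using fl(1) ne by linarith
    have ce: "\<lceil>x\<rceil> = \<lfloor>x\<rfloor> + 1" by (rule ceiling_unique) (use lt fl in auto)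
    have a1: "real_of_int \<lfloor>x\<rfloor> - 1 < real i" "real i < real_of_int \<lfloor>x\<rfloor> + 2"
      using bounds fl by linarith+
    have "real_of_int (\<lfloor>x\<rfloor> - 1) < real_of_int (int i)" "real_of_int (int i) < real_of_int (\<lfloor>x\<rfloor> + 2)"
      using a1 by simp_all
    then have "\<lfloor>x\<rfloor> - 1 < int i" "int i < \<lfloor>x\<rfloor> + 2" by (simp_all only: of_int_less_iff)
    then have "int i = \<lfloor>x\<rfloor> \<or> int i = \<lceil>x\<rceil>" unfolding ce by linarith
    then show ?thesis using False by simp
  qed
  then show ?thesis unfolding x_def .
qed

end
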